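(* For every $\varepsilon>0$ and $n\in\mathbb{N}$ there exists $N\in\mathbb{N}$ such that every $N$-partitioned hypergraph $H$ with density $d$ has an $n$-partitioned subhypergraph $H_0$ with density at least $d-\varepsilon$ and with the following property: denoting by $I$ the index set of $H_0$, there exist vertices $\gamma_{ik}\in V_{ik}$, $i<k$, $i,k\in I$, such that for every $j\in I$ with $i<j<k$, the degree in the $(i,j,k)$-triad of $H_0$ of each top vertex of that triad is at most the degree of $\gamma_{ik}$ in that triad.
   Context: An $n$-partitioned hypergraph $H$ is a finite $3$-uniform hypergraph whose vertex set is partitioned into nonempty sets $V_{ij}$, $1\le i<j\le n$, such that every edge has, for some $1\le i<j<k\le n$, exactly one vertex in each of $V_{ij}$, $V_{ik}$, $V_{jk}$; the set of such edges is the $(i,j,k)$-triad, and vertices of $V_{ik}$ are its top vertices. The density of a triad is its number of edges divided by $|V_{ij}||V_{ik}||V_{jk}|$, and the density of $H$ is the minimum density of a triad. The degree of $v\in V_{ik}$ in the $(i,j,k)$-triad is the number of edges of the triad containing $v$ divided by $|V_{ij}||V_{jk}|$. For $I\subseteq[n]$, the induced subhypergraph with index set $I$ has parts $V_{ij}$, $i<j$, $i,j\in I$ (indexed by elements of $I$) and all edges of $H$ inside these parts; a subhypergraph is obtained from an induced subhypergraph by deleting some edges, and has the same index set. *)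

theory Defs
  imports Main "HOL.Real"
begin

definition partitioned_hypergraph :: "nat \<Rightarrow> (nat \<Rightarrow> nat \<Rightarrow> nat set) \<Rightarrow> nat set set \<Rightarrow> bool" where
  "partitioned_hypergraph N V E \<longleftrightarrow>
     (\<forall>i j. 1 \<le> i \<and> i < j \<and> j \<le> N \<longrightarrow> finite (V i j) \<and> V i j \<noteq> {}) \<and>
     (\<forall>i j i' j'. 1 \<le> i \<and> i < j \<and> j \<le> N \<and> 1 \<le> i' \<and> i' < j' \<and> j' \<le> N \<and> (i, j) \<noteq> (i', j')
        \<longrightarrow> V i j \<inter> V i' j' = {}) \<and>
     (\<forall>e\<in>E. \<exists>i j k. 1 \<le> i \<and> i < j \<and> j < k \<and> k \<le> N \<and>
        (\<exists>a\<in>V i j. \<exists>b\<in>V i k. \<exists>c\<in>V j k. e = {a, b, c}))"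

definition triad :: "(nat \<Rightarrow> nat \<Rightarrow> nat set) \<Rightarrow> nat set set \<Rightarrow> nat \<Rightarrow> nat \<Rightarrow> nat \<Rightarrow> nat set set" where
  "triad V E i j k = {e\<in>E. \<exists>a\<in>V i j. \<exists>b\<in>V i k. \<exists>c\<in>V j k. e = {a, b, c}}"

definition triad_density :: "(nat \<Rightarrow> nat \<Rightarrow> nat set) \<Rightarrow> nat set set \<Rightarrow> nat \<Rightarrow> nat \<Rightarrow> nat \<Rightarrow> real" where
  "triad_density V E i j k =
     real (card (triad V E i j k)) / (real (card (V i j)) * real (card (V i k)) * real (card (V j k)))"

text \<open>Degree of a (top) vertex v of V i k in the (i,j,k)-triad.\<close>
definition triad_degree :: "(nat \<Rightarrow> nat \<Rightarrow> nat set) \<Rightarrow> nat set set \<Rightarrow> nat \<Rightarrow> nat \<Rightarrow> nat \<Rightarrow> nat \<Rightarrow> real" where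
  "triad_degree V E i j k v =
     real (card {e \<in> triad V E i j k. v \<in> e}) / (real (card (V i j)) * real (card (V j k)))"

text \<open>Density of the hypergraph with index set I: minimum density of a triad.
  Convention: if there is no triad (|I| < 3) the density is 1.\<close>
definition hdensity :: "nat set \<Rightarrow> (nat \<Rightarrow> nat \<Rightarrow> nat set) \<Rightarrow> nat set set \<Rightarrow> real" where
  "hdensity I V E =
     (if \<not> (\<exists>i\<in>I. \<exists>j\<in>I. \<exists>k\<in>I. i < j \<and> j < k) then 1
      else Min {triad_density V E i j k | i j k. i \<in> I \<and> j \<in> I \<and> k \<in> I \<and> i < j \<and> j < k})"

definition induced_edges :: "nat set \<Rightarrow> (nat \<Rightarrow> nat \<Rightarrow> nat set) \<Rightarrow> nat set set \<Rightarrow> nat set set" where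
  "induced_edges I V E = {e\<in>E. e \<subseteq> \<Union>{V i j | i j. i \<in> I \<and> j \<in> I \<and> i < j}}"

end

theory Submission
  imports Defs "HOL-Library.Ramsey" Complex_Main
begin

lemma ramsey_multi:
  "\<exists>N::nat. \<forall>f::nat \<Rightarrow> nat set \<Rightarrow> bool. \<exists>Y. Y \<subseteq> {..<N} \<and> card Y = M \<and>
      (\<forall>r<K. \<forall>Z\<in>nsets Y r. \<forall>Z'\<in>nsets Y r. f r Z = f r Z')"
proof (induction K arbitrary: M)
  case 0
  show ?case by (rule exI[of _ M]) (auto intro!: exI[of _ "{..<M}"])
next
  case (Suc K)
  obtain M' :: nat where M': "partn_lst {..<M'} [M,M] K" using ramsey_full[of "[M,M]" K] by blast
  obtain N where N: "\<forall>f::nat \<Rightarrow> nat set \<Rightarrow> bool. \<exists>Y. Y \<subseteq> {..<N} \<and> card Y = M' \<and>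
      (\<forall>r<K. \<forall>Z\<in>nsets Y r. \<forall>Z'\<in>nsets Y r. f r Z = f r Z')" using Suc.IH[of M'] by (elim exE) (rule that)
  show ?case
  proof (rule exI[of _ N], intro allI)
    fix f :: "nat \<Rightarrow> nat set \<Rightarrow> bool"
    obtain Y' where Y': "Y' \<subseteq> {..<N}" "card Y' = M'"
      and hY': "\<forall>r<K. \<forall>Z\<in>nsets Y' r. \<forall>Z'\<in>nsets Y' r. f r Z = f r Z'" using spec[OF N, of f] by (elim exE conjE) (rule that)
    have finY': "finite Y'" using Y'(1) finite_subset by blast
    obtain h where h: "bij_betw h {0..<M'} Y'" using ex_bij_betw_nat_finite[OF finY'] Y'(2) by blast
    define g where "g Z = (if f K (h ` Z) then 0 else 1::nat)" for Z
    have gfun: "g \<in> nsets {..<M'} K \<rightarrow> {..<2}" by (auto simp: g_def)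
    have len: "length [M,M] = 2" by simp
    obtain i H where i: "i < length [M,M]" and H: "H \<in> nsets {..<M'} ([M,M]!i)"
        and gH: "g ` (nsets H K) \<subseteq> {i}"
      using partn_lstE[OF M' gfun len] by blast
    have Mi: "[M,M]!i = M" using i by (cases i) auto
    have HM: "H \<subseteq> {..<M'}" "card H = M" "finite H" using H unfolding Mi nsets_def by auto
    have injH: "inj_on h H" using h HM(1) by (metis atLeast0LessThan bij_betw_def inj_on_subset)
    have sub: "h ` H \<subseteq> Y'" using h HM(1) by (auto simp: bij_betw_def atLeast0LessThan)
    show "\<exists>Y. Y \<subseteq> {..<N} \<and> card Y = M \<and>
      (\<forall>r<Suc K. \<forall>Z\<in>nsets Y r. \<forall>Z'\<in>nsets Y r. f r Z = f r Z')"
    proof (intro exI conjI allI impI ballI)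
      show "h ` H \<subseteq> {..<N}" using sub Y'(1) by blast
      show "card (h ` H) = M" using card_image[OF injH] HM by simp
      fix r Z Z' assume r: "r < Suc K" and Z: "Z \<in> nsets (h ` H) r" and Z': "Z' \<in> nsets (h ` H) r"
      show "f r Z = f r Z'"
      proof (cases "r < K")
        case True
        have "Z \<in> nsets Y' r" "Z' \<in> nsets Y' r"
          using subsetD[OF nsets_mono[OF sub] Z] subsetD[OF nsets_mono[OF sub] Z'] by auto
        then show ?thesis by (intro hY'[rule_format, OF True])
      next
        case False
        then have rK: "r = K" using r by simp
        have ZK: "Z \<in> nsets (h ` H) K" "Z' \<in> nsets (h ` H) K" using Z Z' rK by auto
        obtain Z0 where Z0: "Z0 \<in> nsets H K" "Z = h ` Z0" using nset_image_obtains[OF ZK(1) injH] by blast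
        obtain Z1 where Z1: "Z1 \<in> nsets H K" "Z' = h ` Z1" using nset_image_obtains[OF ZK(2) injH] by blast
        have "g Z0 = i" "g Z1 = i" using gH Z0(1) Z1(1) by auto
        then show ?thesis using Z0 Z1 rK by (auto simp: g_def split: if_splits)
      qed
    qed
  qed
qed

lemma card_top_set:
  fixes f :: "nat \<Rightarrow> real" and \<epsilon> :: real
  assumes T: "finite T" and e: "\<epsilon> \<le> 1" "0 \<le> \<epsilon>"
  shows "\<epsilon> * card T \<le> card {g\<in>T. real (card {v\<in>T. f v > f g}) \<le> \<epsilon> * card T}"
    (is "_ \<le> real (card ?S)")
proof (cases "T \<subseteq> ?S")
  case True
  then have "?S = T" by auto
  then show ?thesis using e by (simp add: mult_left_le_one_le)
next
  case False
  define U where "U = T - ?S"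
  have finU: "finite U" "U \<noteq> {}" using T False unfolding U_def by auto
  have "Max (f ` U) \<in> f ` U" using finU by (intro Max_in) auto
  then obtain v where v0: "v \<in> U" "f v = Max (f ` U)" by auto
  have vmax: "\<forall>w\<in>U. f w \<le> f v" using v0(2) finU by simp
  have v: "v \<in> T" "v \<notin> ?S" "\<forall>w\<in>T. w \<notin> ?S \<longrightarrow> f w \<le> f v"
    using v0(1) vmax unfolding U_def by auto
  have sub: "{w\<in>T. f w > f v} \<subseteq> ?S" using v by force
  have "\<epsilon> * card T < card {w\<in>T. f w > f v}" using v by auto
  also have "\<dots> \<le> card ?S" using card_mono[OF _ sub] T by simp
  finally show ?thesis by simp
qed

lemma card_filter_sum: "finite T \<Longrightarrow> card {x\<in>T. P x} = (\<Sum>x\<in>T. if P x then 1 else 0::nat)"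
  by (simp add: sum.If_cases Int_def)

lemma double_count:
  assumes "finite A" "finite T"
  shows "(\<Sum>j\<in>A. card {x\<in>T. P j x}) = (\<Sum>x\<in>T. card {j\<in>A. P j x})"
proof -
  have "(\<Sum>j\<in>A. card {x\<in>T. P j x}) = (\<Sum>j\<in>A. \<Sum>x\<in>T. if P j x then 1 else 0)"
    using assms by (simp add: card_filter_sum)
  also have "\<dots> = (\<Sum>x\<in>T. \<Sum>j\<in>A. if P j x then 1 else 0)" by (rule sum.swap)
  also have "\<dots> = (\<Sum>x\<in>T. card {j\<in>A. P j x})"
    using assms by (simp add: card_filter_sum)
  finally show ?thesis .
qed

lemma counting_contra:
  fixes \<epsilon> :: real
  assumes A: "finite A" and T: "finite T" and q: "q \<ge> 1"
    and S: "\<And>j. j \<in> A \<Longrightarrow> S j \<subseteq> T \<and> \<epsilon> * card T \<le> card (S j)"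
    and bad: "\<And>J. J \<subseteq> A \<Longrightarrow> card J = q \<Longrightarrow> \<not> (\<exists>x\<in>T. \<forall>j\<in>J. x \<in> S j)"
    and Tne: "T \<noteq> {}"
  shows "card A * \<epsilon> \<le> q - 1"
proof -
  have cnt: "card {j\<in>A. x \<in> S j} \<le> q - 1" if x: "x \<in> T" for x
  proof (rule ccontr)
    assume "\<not> ?thesis"
    then have "q \<le> card {j\<in>A. x \<in> S j}" by simp
    then obtain J where J: "J \<subseteq> {j\<in>A. x \<in> S j}" "card J = q" by (meson obtain_subset_with_card_n)
    then show False using bad[of J] x by auto
  qed
  have eq: "S j = {x\<in>T. x \<in> S j}" if "j \<in> A" for j using S[OF that] by auto
  have "real (card A) * (\<epsilon> * card T) \<le> (\<Sum>j\<in>A. real (card (S j)))"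
  proof -
    have "(\<Sum>j\<in>A. \<epsilon> * card T) \<le> (\<Sum>j\<in>A. real (card (S j)))"
      using S by (intro sum_mono) auto
    then show ?thesis by simp
  qed
  also have "\<dots> = real (\<Sum>j\<in>A. card {x\<in>T. x \<in> S j})"
    using eq by (simp add: of_nat_sum)
  also have "\<dots> = real (\<Sum>x\<in>T. card {j\<in>A. x \<in> S j})"
    using double_count[OF A T, of "\<lambda>j x. x \<in> S j"] by simp
  also have "\<dots> \<le> real (\<Sum>x\<in>T. (q - 1))"
    by (intro of_nat_mono sum_mono cnt)
  also have "\<dots> = real (card T) * real (q - 1)" by simp
  finally have "real (card A) * \<epsilon> * card T \<le> real (q - 1) * card T" by (simp add: algebra_simps)
  moreover have "card T > 0" using T Tne by (simp add: card_gt_0_iff)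
  ultimately have "real (card A) * \<epsilon> \<le> real (q - 1)" by simp
  then show ?thesis using q by simp
qed

lemma ph_disj:
  assumes ph: "partitioned_hypergraph N V E" and x: "x \<in> V p q" "x \<in> V p' q'"
    and r: "1 \<le> p" "p < q" "q \<le> N" "1 \<le> p'" "p' < q'" "q' \<le> N"
  shows "p = p' \<and> q = q'"
proof (rule ccontr)
  assume ne: "\<not> (p = p' \<and> q = q')"
  have "\<forall>i j i' j'. 1 \<le> i \<and> i < j \<and> j \<le> N \<and> 1 \<le> i' \<and> i' < j' \<and> j' \<le> N \<and> (i, j) \<noteq> (i', j')
        \<longrightarrow> V i j \<inter> V i' j' = {}" using ph unfolding partitioned_hypergraph_def by blast
  then have "V p q \<inter> V p' q' = {}" using r ne by auto
  then show False using x by auto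
qed

lemma ph_fin:
  assumes ph: "partitioned_hypergraph N V E" "1 \<le> p" "p < q" "q \<le> N"
  shows "finite (V p q) \<and> V p q \<noteq> {}"
  using assms unfolding partitioned_hypergraph_def by blast

lemma top_eq:
  assumes ph: "partitioned_hypergraph N V E" and r: "1 \<le> i" "i < j" "j < k" "k \<le> N"
    and abc: "a \<in> V i j" "b \<in> V i k" "c \<in> V j k" and x: "x \<in> V i k" "x \<in> {a,b,c}"
  shows "x = b"
proof -
  have "x = a \<or> x = b \<or> x = c" using x by auto
  moreover have "x \<noteq> a"
  proof
    assume "x = a" then have "x \<in> V i j" using abc by simp
    have "i = i \<and> k = j" by (rule ph_disj[OF ph x(1) \<open>x \<in> V i j\<close>]) (use r in linarith)+
    then show False using r by simp
  qed
  moreover have "x \<noteq> c"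
  proof
    assume "x = c" then have "x \<in> V j k" using abc by simp
    have "i = j \<and> k = k" by (rule ph_disj[OF ph x(1) \<open>x \<in> V j k\<close>]) (use r in linarith)+
    then show False using r by simp
  qed
  ultimately show ?thesis by blast
qed

lemma triad_unique:
  assumes ph: "partitioned_hypergraph N V E" and r: "1 \<le> i" "i < j" "j < k" "k \<le> N"
    and r': "1 \<le> i'" "i' < j'" "j' < k'" "k' \<le> N"
    and abc: "a \<in> V i j" "b \<in> V i k" "c \<in> V j k"
    and abc': "a' \<in> V i' j'" "b' \<in> V i' k'" "c' \<in> V j' k'"
    and eq: "{a,b,c} = {a',b',c'}"
  shows "i' = i \<and> j' = j \<and> k' = k \<and> b' = b"
proof -
  have m: "x \<in> {a,b,c}" if "x \<in> {a',b',c'}" for x using that eq by simp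
  have P: "(p = i \<and> q = j) \<or> (p = i \<and> q = k) \<or> (p = j \<and> q = k)"
    if "x \<in> V p q" "x \<in> {a,b,c}" "1 \<le> p" "p < q" "q \<le> N" for x p q
  proof -
    have "x = a \<or> x = b \<or> x = c" using that by auto
    then show ?thesis
    proof (elim disjE)
      assume "x = a" then have "x \<in> V i j" using abc by simp
      have "p = i \<and> q = j" by (rule ph_disj[OF ph that(1) \<open>x \<in> V i j\<close>]) (use r that in linarith)+
      then show ?thesis by simp
    next
      assume "x = b" then have "x \<in> V i k" using abc by simp
      have "p = i \<and> q = k" by (rule ph_disj[OF ph that(1) \<open>x \<in> V i k\<close>]) (use r that in linarith)+
      then show ?thesis by simp
    next
      assume "x = c" then have "x \<in> V j k" using abc by simp
      have "p = j \<and> q = k" by (rule ph_disj[OF ph that(1) \<open>x \<in> V j k\<close>]) (use r that in linarith)+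
      then show ?thesis by simp
    qed
  qed
  have 1: "(i' = i \<and> j' = j) \<or> (i' = i \<and> j' = k) \<or> (i' = j \<and> j' = k)"
    using P[OF abc'(1) m] r' by auto
  have 2: "(i' = i \<and> k' = j) \<or> (i' = i \<and> k' = k) \<or> (i' = j \<and> k' = k)"
    using P[OF abc'(2) m] r' by auto
  have 3: "(j' = i \<and> k' = j) \<or> (j' = i \<and> k' = k) \<or> (j' = j \<and> k' = k)"
    using P[OF abc'(3) m] r' by auto
  have idx: "i' = i \<and> j' = j \<and> k' = k" using 1 2 3 r r' by linarith
  have "b' = b" using top_eq[OF ph r abc, of b'] abc'(2) idx m by auto
  then show ?thesis using idx by simp
qed

lemma triad_sub_image:
  "triad V E i j k \<subseteq> (\<lambda>(a,b,c). {a,b,c}) ` (V i j \<times> V i k \<times> V j k)"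
  unfolding triad_def by force

lemma card_triad_le:
  assumes "finite (V i j)" "finite (V i k)" "finite (V j k)"
  shows "card (triad V E i j k) \<le> card (V i j) * card (V i k) * card (V j k)"
proof -
  have "card (triad V E i j k) \<le> card ((\<lambda>(a,b,c). {a,b,c}) ` (V i j \<times> V i k \<times> V j k))"
    using triad_sub_image assms by (intro card_mono) auto
  also have "\<dots> \<le> card (V i j \<times> V i k \<times> V j k)" by (rule card_image_le) (use assms in auto)
  finally show ?thesis by (simp add: card_cartesian_product)
qed


definition filt :: "nat set \<Rightarrow> (nat \<Rightarrow> nat \<Rightarrow> nat set) \<Rightarrow> nat set set \<Rightarrow> (nat \<Rightarrow> nat \<Rightarrow> nat) \<Rightarrow> nat set set" where
  "filt I V E g = {e \<in> induced_edges I V E. \<forall>i j k b. i \<in> I \<and> j \<in> I \<and> k \<in> I \<and> i < j \<and> j < k \<and>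
      e \<in> triad V E i j k \<and> b \<in> e \<and> b \<in> V i k \<longrightarrow>
      triad_degree V E i j k b \<le> triad_degree V E i j k (g i k)}"

lemma filt_sub: "filt I V E g \<subseteq> induced_edges I V E"
  unfolding filt_def by auto

lemma induced_sub: "induced_edges I V E \<subseteq> E"
  unfolding induced_edges_def by auto

lemma triad_filt: "triad V (filt I V E g) i j k = triad V E i j k \<inter> filt I V E g"
  using filt_sub induced_sub unfolding triad_def by blast

lemma keep_iff:
  assumes ph: "partitioned_hypergraph N V E" and I: "I \<subseteq> {1..N}"
    and ijk: "i \<in> I" "j \<in> I" "k \<in> I" "i < j" "j < k"
    and abc: "a \<in> V i j" "b \<in> V i k" "c \<in> V j k" and e: "e = {a,b,c}" "e \<in> triad V E i j k"
  shows "e \<in> filt I V E g \<longleftrightarrow> triad_degree V E i j k b \<le> triad_degree V E i j k (g i k)"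
proof
  assume "e \<in> filt I V E g"
  then show "triad_degree V E i j k b \<le> triad_degree V E i j k (g i k)"
    unfolding filt_def using ijk e abc by blast
next
  assume deg: "triad_degree V E i j k b \<le> triad_degree V E i j k (g i k)"
  have r: "1 \<le> i" "i < j" "j < k" "k \<le> N" using I ijk by auto
  have eE: "e \<in> E" using e(2) unfolding triad_def by blast
  have "a \<in> \<Union>{V i j | i j. i \<in> I \<and> j \<in> I \<and> i < j}" by (rule UnionI[of "V i j"]) (use abc ijk less_trans[OF ijk(4,5)] in auto)
  moreover have "b \<in> \<Union>{V i j | i j. i \<in> I \<and> j \<in> I \<and> i < j}" by (rule UnionI[of "V i k"], rule CollectI, rule exI[of _ i], rule exI[of _ k]) (use abc ijk in auto)
  moreover have "c \<in> \<Union>{V i j | i j. i \<in> I \<and> j \<in> I \<and> i < j}" by (rule UnionI[of "V j k"]) (use abc ijk less_trans[OF ijk(4,5)] in auto)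
  ultimately have "e \<in> induced_edges I V E" unfolding induced_edges_def using eE e(1) by blast
  moreover have "triad_degree V E i' j' k' b' \<le> triad_degree V E i' j' k' (g i' k')"
    if h: "i' \<in> I" "j' \<in> I" "k' \<in> I" "i' < j'" "j' < k'" "e \<in> triad V E i' j' k'" "b' \<in> e" "b' \<in> V i' k'"
    for i' j' k' b'
  proof -
    obtain a' b'' c' where abc': "a' \<in> V i' j'" "b'' \<in> V i' k'" "c' \<in> V j' k'" "e = {a',b'',c'}"
      using h(6) unfolding triad_def by blast
    have r': "1 \<le> i'" "i' < j'" "j' < k'" "k' \<le> N" using I h by auto
    have u: "i' = i \<and> j' = j \<and> k' = k \<and> b'' = b"
      by (rule triad_unique[OF ph r r' abc abc'(1-3)]) (use e abc' in simp)
    have "b' = b" using top_eq[OF ph r abc, of b'] h(7,8) u e by auto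
    then show ?thesis using u deg by simp
  qed
  ultimately show "e \<in> filt I V E g" unfolding filt_def by blast
qed

lemma deg_nonneg: "0 \<le> triad_degree V E i j k v"
  unfolding triad_degree_def by simp

lemma deg_mono:
  assumes "E' \<subseteq> E" "finite (V i j)" "finite (V i k)" "finite (V j k)"
  shows "triad_degree V E' i j k v \<le> triad_degree V E i j k v"
proof -
  have fin: "finite (triad V E i j k)"
    using triad_sub_image assms by (meson finite_SigmaI finite_imageI finite_subset)
  have "card {e \<in> triad V E' i j k. v \<in> e} \<le> card {e \<in> triad V E i j k. v \<in> e}"
    by (rule card_mono) (use fin assms in \<open>auto simp: triad_def\<close>)
  then show ?thesis unfolding triad_degree_def by (simp add: divide_right_mono)
qed


lemma filt_props:
  assumes ph: "partitioned_hypergraph N V E" and I: "I \<subseteq> {1..N}"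
    and ijk: "i \<in> I" "j \<in> I" "k \<in> I" "i < j" "j < k" and g: "g i k \<in> V i k"
  shows "triad_degree V (filt I V E g) i j k (g i k) = triad_degree V E i j k (g i k)"
    and "v \<in> V i k \<Longrightarrow> triad_degree V (filt I V E g) i j k v \<le> triad_degree V (filt I V E g) i j k (g i k)"
    and "triad_density V (filt I V E g) i j k \<ge> triad_density V E i j k
          - card {v \<in> V i k. triad_degree V E i j k v > triad_degree V E i j k (g i k)} / card (V i k)"
proof -
  let ?F = "filt I V E g"
  let ?d = "triad_degree V E i j k"
  have r: "1 \<le> i" "i < j" "j < k" "k \<le> N" using I ijk by auto
  have fin: "finite (V i j)" "finite (V i k)" "finite (V j k)"
    and ne: "V i j \<noteq> {}" "V i k \<noteq> {}" "V j k \<noteq> {}"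
    using ph_fin[OF ph] r by (meson le_trans less_imp_le_nat less_le_trans)+
  have FE: "?F \<subseteq> E" using filt_sub induced_sub by blast
  have decomp: "\<exists>a b c. a \<in> V i j \<and> b \<in> V i k \<and> c \<in> V j k \<and> e = {a,b,c}" if "e \<in> triad V E i j k" for e
    using that unfolding triad_def by blast
  have eq1: "{e \<in> triad V ?F i j k. g i k \<in> e} = {e \<in> triad V E i j k. g i k \<in> e}"
  proof
    show "{e \<in> triad V ?F i j k. g i k \<in> e} \<subseteq> {e \<in> triad V E i j k. g i k \<in> e}"
      using triad_filt by blast
    show "{e \<in> triad V E i j k. g i k \<in> e} \<subseteq> {e \<in> triad V ?F i j k. g i k \<in> e}"
    proof
      fix e assume e: "e \<in> {e \<in> triad V E i j k. g i k \<in> e}"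
      then obtain a b c where abc: "a \<in> V i j" "b \<in> V i k" "c \<in> V j k" "e = {a,b,c}"
        using decomp by blast
      have "g i k = b" using top_eq[OF ph r abc(1-3) g] e abc(4) by simp
      then have "e \<in> ?F" using keep_iff[OF ph I ijk abc(1-3) abc(4)] e by simp
      then show "e \<in> {e \<in> triad V ?F i j k. g i k \<in> e}" using e triad_filt by blast
    qed
  qed
  show deq: "triad_degree V ?F i j k (g i k) = ?d (g i k)"
    unfolding triad_degree_def using eq1 by simp
  show "triad_degree V ?F i j k v \<le> triad_degree V ?F i j k (g i k)" if v: "v \<in> V i k"
  proof (cases "?d v \<le> ?d (g i k)")
    case True
    have "triad_degree V ?F i j k v \<le> ?d v" by (rule deg_mono[OF FE fin])
    then show ?thesis using True deq by simp
  next
    case False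
    have emp: "{e \<in> triad V ?F i j k. v \<in> e} = {}"
    proof (rule ccontr)
      assume "{e \<in> triad V ?F i j k. v \<in> e} \<noteq> {}"
      then obtain e where e: "e \<in> triad V E i j k" "e \<in> ?F" "v \<in> e" using triad_filt by blast
      then obtain a b c where abc: "a \<in> V i j" "b \<in> V i k" "c \<in> V j k" "e = {a,b,c}"
        using decomp by blast
      have "v = b" using top_eq[OF ph r abc(1-3) v] e abc(4) by simp
      then show False using keep_iff[OF ph I ijk abc(1-3) abc(4)] e False by simp
    qed
    have "triad_degree V ?F i j k v = 0" unfolding triad_degree_def emp by simp
    then show ?thesis using deg_nonneg by simp
  qed
  define B where "B = {v \<in> V i k. ?d v > ?d (g i k)}"
  have finT: "finite (triad V E i j k)"
    using triad_sub_image fin by (meson finite_SigmaI finite_imageI finite_subset)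
  have diff: "triad V E i j k - triad V ?F i j k \<subseteq> (\<lambda>(a,b,c). {a,b,c}) ` (V i j \<times> B \<times> V j k)"
  proof
    fix e assume e: "e \<in> triad V E i j k - triad V ?F i j k"
    then obtain a b c where abc: "a \<in> V i j" "b \<in> V i k" "c \<in> V j k" "e = {a,b,c}"
      using decomp by blast
    have "e \<notin> ?F" using e triad_filt by blast
    then have "b \<in> B" using keep_iff[OF ph I ijk abc(1-3) abc(4)] e abc unfolding B_def by auto
    then show "e \<in> (\<lambda>(a,b,c). {a,b,c}) ` (V i j \<times> B \<times> V j k)" using abc by force
  qed
  have finB: "finite B" using fin unfolding B_def by simp
  have "card (triad V E i j k - triad V ?F i j k) \<le> card ((\<lambda>(a,b,c). {a,b,c}) ` (V i j \<times> B \<times> V j k))"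
    by (rule card_mono[OF _ diff]) (use fin finB in simp)
  also have "\<dots> \<le> card (V i j \<times> B \<times> V j k)" by (rule card_image_le) (use fin finB in simp)
  finally have cd: "card (triad V E i j k - triad V ?F i j k) \<le> card (V i j) * card B * card (V j k)"
    by (simp add: card_cartesian_product)
  have sub: "triad V ?F i j k \<subseteq> triad V E i j k" using triad_filt by blast
  have "card (triad V E i j k) \<le> card (triad V ?F i j k) + card (triad V E i j k - triad V ?F i j k)"
    using card_Un_le[of "triad V ?F i j k" "triad V E i j k - triad V ?F i j k"] sub
    by (metis Un_Diff_cancel Un_absorb1)
  with cd have nat: "card (triad V E i j k) \<le> card (triad V ?F i j k) + card (V i j) * card B * card (V j k)"
    by linarith
  have key: "real (card (triad V E i j k)) \<le> real (card (triad V ?F i j k)) + real (card (V i j)) * card B * card (V j k)"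
    using of_nat_mono[OF nat] by simp
  have pos: "0 < real (card (V i j))" "0 < real (card (V i k))" "0 < real (card (V j k))"
    using fin ne by (simp_all add: card_gt_0_iff)
  show "triad_density V ?F i j k \<ge> triad_density V E i j k - card B / card (V i k)"
    unfolding B_def[symmetric] triad_density_def
  proof -
    let ?P = "real (card (V i j)) * real (card (V i k)) * real (card (V j k))"
    have "real (card B) / real (card (V i k)) = real (card (V i j)) * card B * card (V j k) / ?P"
      using pos by (simp add: field_simps)
    then have "real (card (triad V E i j k)) / ?P - real (card B) / real (card (V i k))
        = (real (card (triad V E i j k)) - real (card (V i j)) * card B * card (V j k)) / ?P"
      by (simp add: diff_divide_distrib)
    also have "\<dots> \<le> real (card (triad V ?F i j k)) / ?P"
      using key pos by (intro divide_right_mono) auto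
    finally show "real (card (triad V E i j k)) / ?P - real (card B) / real (card (V i k))
        \<le> real (card (triad V ?F i j k)) / ?P" .
  qed
qed

lemma fin_dens:
  assumes "finite I"
  shows "finite {triad_density V E i j k | i j k. i \<in> I \<and> j \<in> I \<and> k \<in> I \<and> i < j \<and> j < k}"
proof (rule finite_subset[of _ "(\<lambda>(i,j,k). triad_density V E i j k) ` (I \<times> I \<times> I)"])
  show "{triad_density V E i j k | i j k. i \<in> I \<and> j \<in> I \<and> k \<in> I \<and> i < j \<and> j < k}
    \<subseteq> (\<lambda>(i,j,k). triad_density V E i j k) ` (I \<times> I \<times> I)" by force
  show "finite ((\<lambda>(i,j,k). triad_density V E i j k) ` (I \<times> I \<times> I))" using assms by simp
qed

lemma hd_le:
  assumes "finite I" "i \<in> I" "j \<in> I" "k \<in> I" "i < j" "j < k"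
  shows "hdensity I V E \<le> triad_density V E i j k"
proof -
  have ex: "\<exists>i\<in>I. \<exists>j\<in>I. \<exists>k\<in>I. i < j \<and> j < k" using assms by blast
  have mem: "triad_density V E i j k \<in> {triad_density V E i j k | i j k. i \<in> I \<and> j \<in> I \<and> k \<in> I \<and> i < j \<and> j < k}"
    using assms by blast
  have "hdensity I V E = Min {triad_density V E i j k | i j k. i \<in> I \<and> j \<in> I \<and> k \<in> I \<and> i < j \<and> j < k}"
    unfolding hdensity_def by (rule if_not_P) (use ex in blast)
  then show ?thesis using Min_le[OF fin_dens[OF assms(1)] mem] by simp
qed

lemma hd_ge:
  assumes "finite I" and c: "\<And>i j k. i \<in> I \<Longrightarrow> j \<in> I \<Longrightarrow> k \<in> I \<Longrightarrow> i < j \<Longrightarrow> j < k \<Longrightarrow> c \<le> triad_density V E i j k"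
    and "c \<le> 1"
  shows "c \<le> hdensity I V E"
proof (cases "\<exists>i\<in>I. \<exists>j\<in>I. \<exists>k\<in>I. i < j \<and> j < k")
  case True
  then have ne: "{triad_density V E i j k | i j k. i \<in> I \<and> j \<in> I \<and> k \<in> I \<and> i < j \<and> j < k} \<noteq> {}" by blast
  have "c \<le> Min {triad_density V E i j k | i j k. i \<in> I \<and> j \<in> I \<and> k \<in> I \<and> i < j \<and> j < k}"
    using Min_ge_iff[OF fin_dens[OF assms(1)] ne] c by blast
  moreover have "hdensity I V E = Min {triad_density V E i j k | i j k. i \<in> I \<and> j \<in> I \<and> k \<in> I \<and> i < j \<and> j < k}"
    unfolding hdensity_def by (rule if_not_P) (use True in blast)
  ultimately show ?thesis by simp
next
  case False
  have "hdensity I V E = 1" unfolding hdensity_def by (rule if_P) (rule False)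
  then show ?thesis using assms(3) by simp
qed

lemma dens_le1:
  assumes "finite (V i j)" "finite (V i k)" "finite (V j k)"
  shows "triad_density V E i j k \<le> 1"
proof -
  have "real (card (triad V E i j k)) \<le> real (card (V i j) * card (V i k) * card (V j k))"
    using card_triad_le[OF assms, of E] by (simp only: of_nat_le_iff)
  then have h: "real (card (triad V E i j k)) \<le> real (card (V i j)) * real (card (V i k)) * real (card (V j k))"
    by simp
  show ?thesis
  proof (cases "card (V i j) = 0 \<or> card (V i k) = 0 \<or> card (V j k) = 0")
    case True
    then show ?thesis unfolding triad_density_def by auto
  next
    case False
    then have "0 < real (card (V i j)) * real (card (V i k)) * real (card (V j k))" by simp
    then show ?thesis unfolding triad_density_def using h by (simp add: divide_le_eq_1)
  qed
qed

lemma hd_le1: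
  assumes ph: "partitioned_hypergraph N V E"
  shows "hdensity {1..N} V E \<le> 1"
proof (cases "\<exists>i\<in>{1..N}. \<exists>j\<in>{1..N}. \<exists>k\<in>{1..N}. i < j \<and> j < k")
  case True
  then obtain i j k where ijk: "i\<in>{1..N}" "j\<in>{1..N}" "k\<in>{1..N}" "i < j" "j < k"
    by (elim bexE conjE) (rule that)
  have r: "1 \<le> i" "i < j" "j < k" "k \<le> N" using ijk by auto
  have fin: "finite (V i j)" "finite (V i k)" "finite (V j k)"
    using ph_fin[OF ph, of i j] ph_fin[OF ph, of i k] ph_fin[OF ph, of j k] r by simp_all
  show ?thesis using hd_le[OF _ ijk] dens_le1[OF fin] by (meson finite_atLeastAtMost order_trans)
next
  case False
  have "hdensity {1..N} V E = 1" unfolding hdensity_def by (rule if_P) (rule False)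
  then show ?thesis by simp
qed

lemma insert_ik:
  fixes i k :: nat
  assumes "finite J" "\<forall>j\<in>J. i < j \<and> j < k" "i < k"
  shows "Min (insert i (insert k J)) = i" "Max (insert i (insert k J)) = k"
    "insert i (insert k J) - {i, k} = J" "card (insert i (insert k J)) = card J + 2"
proof -
  show "Min (insert i (insert k J)) = i" by (rule Min_eqI) (use assms in auto)
  show "Max (insert i (insert k J)) = k" by (rule Max_eqI) (use assms in auto)
  show "insert i (insert k J) - {i, k} = J" using assms by auto
  have "i \<notin> J" "k \<notin> J" using assms by auto
  then have "i \<notin> insert k J" using assms(3) by simp
  then have "card (insert i (insert k J)) = Suc (card (insert k J))"
    using assms(1) by (simp add: card_insert_disjoint)
  then show "card (insert i (insert k J)) = card J + 2"
    using assms(1) \<open>k \<notin> J\<close> by (simp add: card_insert_disjoint)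
qed

lemma pull_Suc:
  assumes "Z \<subseteq> Suc ` Y" "finite Y"
  shows "{x \<in> Y. Suc x \<in> Z} \<in> nsets Y (card Z) \<and> Z = Suc ` {x \<in> Y. Suc x \<in> Z}"
proof -
  define Z1 where "Z1 = {x \<in> Y. Suc x \<in> Z}"
  have eq: "Z = Suc ` Z1" using assms unfolding Z1_def by auto
  have c: "card (Suc ` Z1) = card Z1" by (rule card_image) simp
  have f: "finite Z1" "Z1 \<subseteq> Y" using assms(2) unfolding Z1_def by auto
  have "Z1 \<in> nsets Y (card Z)" unfolding nsets_def using f c eq by simp
  then show ?thesis using eq unfolding Z1_def by simp
qed

theorem lemma5p1:
  fixes \<epsilon> :: real and n :: nat
  assumes "\<epsilon> > 0"
  shows "\<exists>N::nat. \<forall>V E d. partitioned_hypergraph N V E \<and> d = hdensity {1..N} V E \<longrightarrow>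
           (\<exists>I E0. I \<subseteq> {1..N} \<and> card I = n \<and> E0 \<subseteq> induced_edges I V E \<and>
              hdensity I V E0 \<ge> d - \<epsilon> \<and>
              (\<forall>i\<in>I. \<forall>k\<in>I. i < k \<longrightarrow>
                 (\<exists>\<gamma>\<in>V i k. \<forall>j\<in>I. i < j \<and> j < k \<longrightarrow>
                    (\<forall>v\<in>V i k. triad_degree V E0 i j k v \<le> triad_degree V E0 i j k \<gamma>))))"
proof -
  define e' where "e' = min \<epsilon> 1"
  have e': "0 < e'" "e' \<le> 1" "e' \<le> \<epsilon>" using assms unfolding e'_def by auto
  define L where "L = nat \<lceil>real n / e'\<rceil> + 1"
  have "real n / e' \<le> real (nat \<lceil>real n / e'\<rceil>)" by linarith
  then have "real n / e' < real L" unfolding L_def by simp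
  then have L: "real n < real L * e'" using e'(1) by (simp add: divide_less_eq)
  define M where "M = max n (L + 2)"
  obtain N0 where N0: "\<forall>f::nat \<Rightarrow> nat set \<Rightarrow> bool. \<exists>Y. Y \<subseteq> {..<N0} \<and> card Y = M \<and>
      (\<forall>r<Suc n. \<forall>Z\<in>nsets Y r. \<forall>Z'\<in>nsets Y r. f r Z = f r Z')"
    using ramsey_multi[of M "Suc n"] by (elim exE) (rule that)
  show ?thesis
  proof (rule exI[of _ N0], intro allI impI, elim conjE)
    fix V E d assume ph: "partitioned_hypergraph N0 V E" and d: "d = hdensity {1..N0} V E"
    define S where "S i j k = {\<gamma> \<in> V i k. real (card {v \<in> V i k. triad_degree V E i j k \<gamma> < triad_degree V E i j k v}) \<le> e' * card (V i k)}" for i j k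
    define Good where "Good Z = (\<exists>\<gamma>\<in>V (Min Z) (Max Z). \<forall>j\<in>Z - {Min Z, Max Z}. \<gamma> \<in> S (Min Z) j (Max Z))" for Z
    obtain Y where Y: "Y \<subseteq> {..<N0}" "card Y = M"
      and hom: "\<forall>r<Suc n. \<forall>Z\<in>nsets Y r. \<forall>Z'\<in>nsets Y r. Good (Suc ` Z) = Good (Suc ` Z')"
      using spec[OF N0, of "\<lambda>r Z. Good (Suc ` Z)"] by (elim exE conjE) (rule that)
    have finY: "finite Y" using Y(1) finite_subset by blast
    define Y' where "Y' = Suc ` Y"
    have Y'sub: "Y' \<subseteq> {1..N0}" using Y(1) unfolding Y'_def by auto
    have cY': "card Y' = M" unfolding Y'_def using Y(2) by (simp add: card_image)
    have finY': "finite Y'" unfolding Y'_def using finY by simp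
    have Sprop: "S i j k \<subseteq> V i k \<and> e' * card (V i k) \<le> card (S i j k)"
      if "i \<in> {1..N0}" "j \<in> {1..N0}" "k \<in> {1..N0}" "i < j" "j < k" for i j k
    proof -
      have "finite (V i k)" using ph_fin[OF ph, of i k] that by simp
      then show ?thesis unfolding S_def using card_top_set[of "V i k" e' "triad_degree V E i j k"] e'
        by auto
    qed
    have allgood: "Good Z" if Z: "Z \<subseteq> Y'" "3 \<le> card Z" "card Z \<le> n" for Z
    proof (rule ccontr)
      assume bad: "\<not> Good Z"
      have allbad: "\<not> Good Z'" if Z': "Z' \<subseteq> Y'" "card Z' = card Z" for Z'
      proof -
        have p1: "{x \<in> Y. Suc x \<in> Z} \<in> nsets Y (card Z)" "Z = Suc ` {x \<in> Y. Suc x \<in> Z}"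
          using pull_Suc[OF _ finY, of Z] Z(1) unfolding Y'_def by auto
        have p2: "{x \<in> Y. Suc x \<in> Z'} \<in> nsets Y (card Z)" "Z' = Suc ` {x \<in> Y. Suc x \<in> Z'}"
          using pull_Suc[OF _ finY, of Z'] Z'(1) Z'(2) unfolding Y'_def by auto
        have "card Z < Suc n" using Z(3) by simp
        then have "Good (Suc ` {x \<in> Y. Suc x \<in> Z}) = Good (Suc ` {x \<in> Y. Suc x \<in> Z'})"
          using hom p1(1) p2(1) by blast
        then show ?thesis using bad p1(2) p2(2) by simp
      qed
      define i where "i = Min Y'"
      define k where "k = Max Y'"
      define Mid where "Mid = Y' - {i, k}"
      have Y'ne: "Y' \<noteq> {}" using cY' unfolding M_def by auto
      have iY: "i \<in> Y'" "\<forall>y\<in>Y'. i \<le> y" unfolding i_def using finY' Y'ne by auto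
      have kY: "k \<in> Y'" "\<forall>y\<in>Y'. y \<le> k" unfolding k_def using finY' Y'ne by auto
      have ik: "i \<noteq> k"
      proof
        assume "i = k"
        then have "Y' \<subseteq> {i}" using iY kY by force
        then have "card Y' \<le> 1" using card_mono[of "{i}" Y'] by simp
        then show False using cY' unfolding M_def by simp
      qed
      have cMid: "card Mid = M - 2" unfolding Mid_def
        using card_Diff_subset[of "{i,k}" Y'] iY kY ik cY' by simp
      have midr: "i < j \<and> j < k" if "j \<in> Mid" for j
        using that iY kY unfolding Mid_def by force
      have ikr: "i \<in> {1..N0}" "k \<in> {1..N0}" "i < k" using iY kY Y'sub ik by (auto simp: order_le_less)
      have finMid: "finite Mid" unfolding Mid_def using finY' by simp
      have q: "card Z - 2 \<ge> 1" using Z(2) by simp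
      have "card Mid * e' \<le> real (card Z - 2) - 1"
      proof (rule counting_contra[OF finMid _ q, of "V i k" "\<lambda>j. S i j k" e'])
        show "finite (V i k)" using ph_fin[OF ph, of i k] ikr by simp
        show "V i k \<noteq> {}" using ph_fin[OF ph, of i k] ikr by simp
        show "S i j k \<subseteq> V i k \<and> e' * real (card (V i k)) \<le> real (card (S i j k))" if "j \<in> Mid" for j
          using Sprop[of i j k] midr[OF that] ikr that Y'sub unfolding Mid_def by auto
        show "\<not> (\<exists>x\<in>V i k. \<forall>j\<in>J. x \<in> S i j k)" if J: "J \<subseteq> Mid" "card J = card Z - 2" for J
        proof -
          have finJ: "finite J" using J(1) finMid finite_subset by blast
          have Jr: "\<forall>j\<in>J. i < j \<and> j < k" using J(1) midr by blast
          note ins = insert_ik[OF finJ Jr ikr(3)]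
          have sub: "insert i (insert k J) \<subseteq> Y'" using J(1) iY kY unfolding Mid_def by blast
          have "card (insert i (insert k J)) = card Z" using ins(4) J(2) Z(2) by simp
          then have "\<not> Good (insert i (insert k J))" using allbad sub by blast
          then show ?thesis unfolding Good_def ins(1) ins(2) ins(3) by blast
        qed
      qed
      moreover have "real L \<le> real (card Mid)" using cMid unfolding M_def by simp
      moreover have "real (card Z - 2) - 1 < real n" using Z(3) by linarith
      ultimately show False using L e'(1)
        by (smt (verit, ccfv_SIG) mult_right_mono)
    qed
    have nM: "n \<le> card Y'" using cY' unfolding M_def by simp
    obtain I where I: "I \<subseteq> Y'" "card I = n" using obtain_subset_with_card_n[OF nM] by metis
    have Isub: "I \<subseteq> {1..N0}" using I(1) Y'sub by blast
    have finI: "finite I" using I(1) finY' finite_subset by blast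
    have exg: "\<exists>\<gamma>. \<gamma> \<in> V i k \<and> (\<forall>j\<in>I. i < j \<and> j < k \<longrightarrow> \<gamma> \<in> S i j k)"
      if ik: "i \<in> I" "k \<in> I" "i < k" for i k
    proof -
      define J where "J = {j \<in> I. i < j \<and> j < k}"
      have finJ: "finite J" unfolding J_def using finI by simp
      have Jr: "\<forall>j\<in>J. i < j \<and> j < k" unfolding J_def by blast
      have r: "1 \<le> i" "i < k" "k \<le> N0" using ik Isub by auto
      have Vne: "V i k \<noteq> {}" using ph_fin[OF ph, of i k] r by simp
      show ?thesis
      proof (cases "J = {}")
        case True
        then show ?thesis using Vne unfolding J_def by blast
      next
        case False
        note ins = insert_ik[OF finJ Jr ik(3)]
        have sub: "insert i (insert k J) \<subseteq> I" using ik unfolding J_def by blast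
        have "card J \<ge> 1" using False finJ by (simp add: Suc_leI card_gt_0_iff)
        then have c3: "3 \<le> card (insert i (insert k J))" using ins(4) by simp
        have cn: "card (insert i (insert k J)) \<le> n" using card_mono[OF finI sub] I(2) by simp
        have "Good (insert i (insert k J))" using allgood[OF _ c3 cn] sub I(1) by blast
        then have "\<exists>\<gamma>\<in>V i k. \<forall>j\<in>J. \<gamma> \<in> S i j k" unfolding Good_def ins(1) ins(2) ins(3) .
        then show ?thesis unfolding J_def by blast
      qed
    qed
    define g where "g i k = (SOME \<gamma>. \<gamma> \<in> V i k \<and> (\<forall>j\<in>I. i < j \<and> j < k \<longrightarrow> \<gamma> \<in> S i j k))" for i k
    have g: "g i k \<in> V i k \<and> (\<forall>j\<in>I. i < j \<and> j < k \<longrightarrow> g i k \<in> S i j k)"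
      if "i \<in> I" "k \<in> I" "i < k" for i k
      unfolding g_def using someI_ex[OF exg[OF that]] .
    define E0 where "E0 = filt I V E g"
    have d1: "d \<le> 1" using hd_le1[OF ph] d by simp
    have dens: "d - \<epsilon> \<le> hdensity I V E0"
    proof (rule hd_ge[OF finI])
      show "d - \<epsilon> \<le> 1" using d1 assms by simp
      fix i j k assume ijk: "i \<in> I" "j \<in> I" "k \<in> I" "i < j" "j < k"
      have ik: "i < k" using ijk by simp
      note gg = g[OF ijk(1) ijk(3) ik]
      have "g i k \<in> S i j k" using gg ijk by blast
      then have cB: "real (card {v \<in> V i k. triad_degree V E i j k (g i k) < triad_degree V E i j k v}) \<le> e' * card (V i k)"
        unfolding S_def by blast
      have r: "1 \<le> i" "i < k" "k \<le> N0" using ijk Isub by auto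
      have pos: "0 < real (card (V i k))" using ph_fin[OF ph, of i k] r by (simp add: card_gt_0_iff)
      have cB': "real (card {v \<in> V i k. triad_degree V E i j k (g i k) < triad_degree V E i j k v}) / card (V i k) \<le> e'"
        using cB pos by (simp add: divide_le_eq)
      have "d \<le> triad_density V E i j k"
      proof -
        have m: "i \<in> {1..N0}" "j \<in> {1..N0}" "k \<in> {1..N0}" using ijk Isub by auto
        show ?thesis unfolding d by (rule hd_le[OF finite_atLeastAtMost m ijk(4,5)])
      qed
      moreover have "triad_density V E i j k - real (card {v \<in> V i k. triad_degree V E i j k (g i k) < triad_degree V E i j k v}) / card (V i k)
          \<le> triad_density V E0 i j k"
        unfolding E0_def using filt_props(3)[OF ph Isub ijk, of g] gg by simp
      ultimately show "d - \<epsilon> \<le> triad_density V E0 i j k" using cB' e'(3) by linarith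
    qed
    show "\<exists>I E0. I \<subseteq> {1..N0} \<and> card I = n \<and> E0 \<subseteq> induced_edges I V E \<and>
              hdensity I V E0 \<ge> d - \<epsilon> \<and>
              (\<forall>i\<in>I. \<forall>k\<in>I. i < k \<longrightarrow>
                 (\<exists>\<gamma>\<in>V i k. \<forall>j\<in>I. i < j \<and> j < k \<longrightarrow>
                    (\<forall>v\<in>V i k. triad_degree V E0 i j k v \<le> triad_degree V E0 i j k \<gamma>)))"
    proof (intro exI conjI)
      show "I \<subseteq> {1..N0}" by (rule Isub)
      show "card I = n" by (rule I(2))
      show "E0 \<subseteq> induced_edges I V E" unfolding E0_def by (rule filt_sub)
      show "d - \<epsilon> \<le> hdensity I V E0" by (rule dens)
      show "\<forall>i\<in>I. \<forall>k\<in>I. i < k \<longrightarrow> (\<exists>\<gamma>\<in>V i k. \<forall>j\<in>I. i < j \<and> j < k \<longrightarrow>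
                    (\<forall>v\<in>V i k. triad_degree V E0 i j k v \<le> triad_degree V E0 i j k \<gamma>))"
      proof (intro ballI impI)
        fix i k assume ik: "i \<in> I" "k \<in> I" "i < k"
        note gg = g[OF ik]
        show "\<exists>\<gamma>\<in>V i k. \<forall>j\<in>I. i < j \<and> j < k \<longrightarrow>
                    (\<forall>v\<in>V i k. triad_degree V E0 i j k v \<le> triad_degree V E0 i j k \<gamma>)"
        proof (rule bexI[of _ "g i k"])
          show "g i k \<in> V i k" using gg by blast
          show "\<forall>j\<in>I. i < j \<and> j < k \<longrightarrow>
                    (\<forall>v\<in>V i k. triad_degree V E0 i j k v \<le> triad_degree V E0 i j k (g i k))"
          proof (intro ballI impI)
            fix j v assume j: "j \<in> I" "i < j \<and> j < k" and v: "v \<in> V i k"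
            show "triad_degree V E0 i j k v \<le> triad_degree V E0 i j k (g i k)"
              unfolding E0_def using filt_props(2)[OF ph Isub ik(1) j(1) ik(2) _ _ _ v] j gg by blast
          qed
        qed
      qed
    qed
  qed
qed

end
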